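(* Let $k$ be a field, $V$ a $k$-vector space and $\varphi,\psi\in\mathrm{End}_k(V)$ finite potent endomorphisms such that $(1+\varphi)(1+\psi)=1$. Then $\langle\varphi,\psi\rangle:=\varphi\,k[\varphi,\psi]+\psi\,k[\varphi,\psi]$ is a finite potent subspace of $\mathrm{End}_k(V)$.
   Context: An endomorphism $\varphi$ of $V$ is finite potent if $\varphi^nV$ is finite dimensional for some $n$. $k[\varphi,\psi]$ is the $k$-subalgebra of $\mathrm{End}_k(V)$ generated by $\varphi,\psi$. A subspace $F\subseteq\mathrm{End}_k(V)$ is finite potent if there is $n$ such that for any $\varphi_1,\dots,\varphi_n\in F$ the space $\varphi_1\cdots\varphi_nV$ is finite dimensional. *)

theory Defs
  imports Complex_Main
begin

definition fin_dim_sub :: "('k::field \<Rightarrow> 'v::ab_group_add \<Rightarrow> 'v) \<Rightarrow> 'v set \<Rightarrow> bool" where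
  "fin_dim_sub scale S \<longleftrightarrow> (\<exists>B. finite B \<and> module.span scale B = S)"

definition finite_potent :: "('k::field \<Rightarrow> 'v::ab_group_add \<Rightarrow> 'v) \<Rightarrow> ('v \<Rightarrow> 'v) \<Rightarrow> bool" where
  "finite_potent scale f \<longleftrightarrow> (\<exists>n. fin_dim_sub scale (range (f ^^ n)))"

inductive_set gen_alg :: "('k::field \<Rightarrow> 'v::ab_group_add \<Rightarrow> 'v) \<Rightarrow> ('v \<Rightarrow> 'v) \<Rightarrow> ('v \<Rightarrow> 'v) \<Rightarrow> ('v \<Rightarrow> 'v) set"
  for scale f g where
  one: "id \<in> gen_alg scale f g"
| gen1: "f \<in> gen_alg scale f g"
| gen2: "g \<in> gen_alg scale f g"
| add: "a \<in> gen_alg scale f g \<Longrightarrow> b \<in> gen_alg scale f g \<Longrightarrow> (\<lambda>x. a x + b x) \<in> gen_alg scale f g"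
| smult: "a \<in> gen_alg scale f g \<Longrightarrow> (\<lambda>x. scale c (a x)) \<in> gen_alg scale f g"
| comp: "a \<in> gen_alg scale f g \<Longrightarrow> b \<in> gen_alg scale f g \<Longrightarrow> a \<circ> b \<in> gen_alg scale f g"

definition gen_ideal :: "('k::field \<Rightarrow> 'v::ab_group_add \<Rightarrow> 'v) \<Rightarrow> ('v \<Rightarrow> 'v) \<Rightarrow> ('v \<Rightarrow> 'v) \<Rightarrow> ('v \<Rightarrow> 'v) set" where
  "gen_ideal scale f g = {(\<lambda>x. f (a x) + g (b x)) | a b. a \<in> gen_alg scale f g \<and> b \<in> gen_alg scale f g}"

definition finite_potent_set :: "('k::field \<Rightarrow> 'v::ab_group_add \<Rightarrow> 'v) \<Rightarrow> ('v \<Rightarrow> 'v) set \<Rightarrow> bool" where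
  "finite_potent_set scale F \<longleftrightarrow>
     (\<exists>n. \<forall>fs. length fs = n \<longrightarrow> set fs \<subseteq> F \<longrightarrow> fin_dim_sub scale (range (foldr (\<circ>) fs id)))"

end

theory Submission
  imports Defs
begin

context vector_space begin

lemma A_decomp:
  assumes lphi: "Vector_Spaces.linear scale scale \<phi>"
    and rel: "\<And>x. \<phi> (x + \<psi> x) = - \<psi> x"
    and a: "a \<in> gen_alg scale \<phi> \<psi>"
  shows "\<exists>c b. b \<in> gen_alg scale \<phi> \<psi> \<and> (\<forall>x. a x = scale c x + \<phi> (b x))"
  using a
proof induct
  interpret L: Vector_Spaces.linear scale scale \<phi> by fact
  case one
  have "(\<lambda>x. scale 0 (id x)) \<in> gen_alg scale \<phi> \<psi>" by (rule gen_alg.smult[OF gen_alg.one])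
  then show ?case by (intro exI[of _ 1] exI[of _ "\<lambda>x. scale 0 (id x)"]) (simp add: L.scale)
next
  interpret L: Vector_Spaces.linear scale scale \<phi> by fact
  case gen1
  show ?case by (intro exI[of _ 0] exI[of _ id]) (use gen_alg.one[unfolded id_def] in simp)
next
  interpret L: Vector_Spaces.linear scale scale \<phi> by fact
  case gen2
  have "(\<lambda>x. scale (-1) (id x + \<psi> x)) \<in> gen_alg scale \<phi> \<psi>"
    by (intro gen_alg.smult gen_alg.add gen_alg.one gen_alg.gen2)
  moreover have "\<psi> x = \<phi> (scale (-1) (id x + \<psi> x))" for x
    using rel[of x] L.neg[of "x + \<psi> x"] by (simp add: L.scale)
  ultimately show ?case by (intro exI[of _ 0] exI[of _ "\<lambda>x. scale (-1) (id x + \<psi> x)"]) simp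
next
  interpret L: Vector_Spaces.linear scale scale \<phi> by fact
  case (add a b)
  then obtain c1 b1 c2 b2 where h: "b1 \<in> gen_alg scale \<phi> \<psi>" "\<forall>x. a x = scale c1 x + \<phi> (b1 x)"
    "b2 \<in> gen_alg scale \<phi> \<psi>" "\<forall>x. b x = scale c2 x + \<phi> (b2 x)" by blast
  have "(\<lambda>x. b1 x + b2 x) \<in> gen_alg scale \<phi> \<psi>" using h by (intro gen_alg.add)
  moreover have "a x + b x = scale (c1 + c2) x + \<phi> (b1 x + b2 x)" for x
    using h by (simp add: L.add scale_left_distrib algebra_simps)
  ultimately show ?case by blast
next
  interpret L: Vector_Spaces.linear scale scale \<phi> by fact
  case (smult a c)
  then obtain c1 b1 where h: "b1 \<in> gen_alg scale \<phi> \<psi>" "\<forall>x. a x = scale c1 x + \<phi> (b1 x)" by blast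
  have "(\<lambda>x. scale c (b1 x)) \<in> gen_alg scale \<phi> \<psi>" using h by (intro gen_alg.smult)
  moreover have "scale c (a x) = scale (c * c1) x + \<phi> (scale c (b1 x))" for x
    using h by (simp add: L.scale scale_right_distrib)
  ultimately show ?case by blast
next
  interpret L: Vector_Spaces.linear scale scale \<phi> by fact
  case (comp a b)
  then obtain c1 b1 c2 b2 where h: "b1 \<in> gen_alg scale \<phi> \<psi>" "\<forall>x. a x = scale c1 x + \<phi> (b1 x)"
    "b2 \<in> gen_alg scale \<phi> \<psi>" "\<forall>x. b x = scale c2 x + \<phi> (b2 x)" by blast
  have "(\<lambda>x. scale c1 (b2 x) + (b1 \<circ> b) x) \<in> gen_alg scale \<phi> \<psi>"
    using h comp by (intro gen_alg.add gen_alg.smult gen_alg.comp)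
  moreover have "(a \<circ> b) x = scale (c1 * c2) x + \<phi> (scale c1 (b2 x) + (b1 \<circ> b) x)" for x
    using h by (simp add: L.add L.scale scale_right_distrib add.assoc)
  ultimately show ?case by blast
qed

lemma A_comm:
  assumes lphi: "Vector_Spaces.linear scale scale \<phi>"
    and rel: "\<And>x. \<phi> (x + \<psi> x) = - \<psi> x"
    and a: "a \<in> gen_alg scale \<phi> \<psi>"
  shows "\<exists>b\<in>gen_alg scale \<phi> \<psi>. a \<circ> (\<phi> ^^ n) = (\<phi> ^^ n) \<circ> b"
  using a
proof (induct n arbitrary: a)
  case 0
  then show ?case by auto
next
  interpret L: Vector_Spaces.linear scale scale \<phi> by fact
  case (Suc n)
  obtain b where b: "b \<in> gen_alg scale \<phi> \<psi>" "a \<circ> (\<phi> ^^ n) = (\<phi> ^^ n) \<circ> b"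
    using Suc by blast
  obtain c b1 where h: "b1 \<in> gen_alg scale \<phi> \<psi>" "\<forall>x. b x = scale c x + \<phi> (b1 x)"
    using A_decomp[OF lphi rel b(1)] by blast
  let ?b = "\<lambda>x. scale c (id x) + (b1 \<circ> \<phi>) x"
  have "?b \<in> gen_alg scale \<phi> \<psi>" using h
    by (intro gen_alg.add gen_alg.smult gen_alg.one gen_alg.comp gen_alg.gen1)
  moreover have "b \<circ> \<phi> = \<phi> \<circ> ?b" using h by (auto simp: L.add L.scale)
  ultimately have "\<exists>b'\<in>gen_alg scale \<phi> \<psi>. b \<circ> \<phi> = \<phi> \<circ> b'" by blast
  then obtain b' where b': "b' \<in> gen_alg scale \<phi> \<psi>" "b \<circ> \<phi> = \<phi> \<circ> b'" by blast
  have ps: "\<And>x. (\<phi> ^^ Suc n) x = (\<phi> ^^ n) (\<phi> x)" by (simp only: funpow_Suc_right o_apply)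
  have b2: "\<And>x. a ((\<phi> ^^ n) x) = (\<phi> ^^ n) (b x)" using b(2) by (metis comp_apply)
  have b'2: "\<And>x. b (\<phi> x) = \<phi> (b' x)" using b'(2) by (metis comp_apply)
  have "a \<circ> (\<phi> ^^ Suc n) = (\<phi> ^^ Suc n) \<circ> b'"
    by (simp only: fun_eq_iff o_apply ps b2 b'2 simp_thms)
  then show ?case using b' by blast
qed

lemma I_decomp:
  assumes lphi: "Vector_Spaces.linear scale scale \<phi>"
    and rel: "\<And>x. \<phi> (x + \<psi> x) = - \<psi> x"
    and g: "g \<in> gen_ideal scale \<phi> \<psi>"
  shows "\<exists>a\<in>gen_alg scale \<phi> \<psi>. g = \<phi> \<circ> a"
proof -
  interpret L: Vector_Spaces.linear scale scale \<phi> by fact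
  obtain a b where ab: "a \<in> gen_alg scale \<phi> \<psi>" "b \<in> gen_alg scale \<phi> \<psi>"
    "g = (\<lambda>x. \<phi> (a x) + \<psi> (b x))" using g unfolding gen_ideal_def by blast
  let ?a = "\<lambda>x. a x + scale (-1) ((id \<circ> b) x + (\<psi> \<circ> b) x)"
  have "?a \<in> gen_alg scale \<phi> \<psi>" using ab
    by (intro gen_alg.add gen_alg.smult gen_alg.one gen_alg.comp gen_alg.gen2)
  moreover have "\<psi> (b x) = \<phi> (scale (-1) (b x + \<psi> (b x)))" for x
    using rel[of "b x"] L.neg[of "b x + \<psi> (b x)"] by (simp add: L.scale)
  then have "g = \<phi> \<circ> ?a" using ab by (auto simp: L.add)
  ultimately show ?thesis by blast
qed

lemma prod_decomp:
  assumes lphi: "Vector_Spaces.linear scale scale \<phi>"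
    and rel: "\<And>x. \<phi> (x + \<psi> x) = - \<psi> x"
    and fs: "set fs \<subseteq> gen_ideal scale \<phi> \<psi>"
  shows "\<exists>b\<in>gen_alg scale \<phi> \<psi>. foldr (\<circ>) fs id = (\<phi> ^^ length fs) \<circ> b"
  using fs
proof (induct fs)
  case Nil
  show ?case by (rule bexI[of _ id]) (auto intro: gen_alg.one)
next
  case (Cons f fs)
  have "set fs \<subseteq> gen_ideal scale \<phi> \<psi>" using Cons(2) by simp
  then obtain b where b: "b \<in> gen_alg scale \<phi> \<psi>" "foldr (\<circ>) fs id = (\<phi> ^^ length fs) \<circ> b"
    using Cons(1) by blast
  obtain a where a: "a \<in> gen_alg scale \<phi> \<psi>" "f = \<phi> \<circ> a"
    using I_decomp[OF lphi rel] Cons(2) by auto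
  obtain a' where a': "a' \<in> gen_alg scale \<phi> \<psi>" "a \<circ> (\<phi> ^^ length fs) = (\<phi> ^^ length fs) \<circ> a'"
    using A_comm[OF lphi rel a(1)] by blast
  have "foldr (\<circ>) (f # fs) id = \<phi> \<circ> (a \<circ> (\<phi> ^^ length fs)) \<circ> b"
    by (simp add: a(2) b(2) o_assoc)
  also have "\<dots> = (\<phi> ^^ length (f # fs)) \<circ> (a' \<circ> b)"
    by (simp add: a'(2) o_assoc)
  finally show ?case using a' b gen_alg.comp by blast
qed

lemma A_linear:
  assumes lphi: "Vector_Spaces.linear scale scale \<phi>"
    and lpsi: "Vector_Spaces.linear scale scale \<psi>"
    and a: "a \<in> gen_alg scale \<phi> \<psi>"
  shows "Vector_Spaces.linear scale scale a"
proof -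
  interpret P: vector_space_pair scale scale by unfold_locales
  show ?thesis using a
proof induct
  case one
  then show ?case using linear_id .
next
  case gen1 then show ?case using lphi .
next
  case gen2 then show ?case using lpsi .
next
  case (add a b) then show ?case using P.linear_compose_add by blast
next
  case (smult a c) then show ?case using P.linear_compose_scale_right by blast
next
  case (comp a b) then show ?case using Vector_Spaces.linear_compose by blast
qed
qed

lemma pow_linear:
  assumes lphi: "Vector_Spaces.linear scale scale \<phi>"
  shows "Vector_Spaces.linear scale scale (\<phi> ^^ n)"
proof (induct n)
  case 0 show ?case using linear_ident by simp
next
  case (Suc n)
  have "\<phi> ^^ Suc n = \<phi> \<circ> \<phi> ^^ n" by (simp only: funpow.simps)
  then show ?case using Vector_Spaces.linear_compose[OF Suc lphi] by (simp only:)
qed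

end

theorem proposition3p6:
  fixes scale :: "'k::field \<Rightarrow> 'v::ab_group_add \<Rightarrow> 'v"
    and \<phi> \<psi> :: "'v \<Rightarrow> 'v"
  assumes "vector_space scale"
    and "Vector_Spaces.linear scale scale \<phi>" and "Vector_Spaces.linear scale scale \<psi>"
    and "finite_potent scale \<phi>" and "finite_potent scale \<psi>"
    and "(\<lambda>x. x + \<phi> x) \<circ> (\<lambda>x. x + \<psi> x) = id"
  shows "finite_potent_set scale (gen_ideal scale \<phi> \<psi>)"
proof -
  interpret vector_space scale by fact
  have rel: "\<And>x. \<phi> (x + \<psi> x) = - \<psi> x"
  proof -
    fix x
    have "x + \<psi> x + \<phi> (x + \<psi> x) = x" using fun_cong[OF assms(6), of x] by simp
    then have "\<phi> (x + \<psi> x) = x - (x + \<psi> x)" by (metis add_diff_cancel_left')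
    then show "\<phi> (x + \<psi> x) = - \<psi> x" by simp
  qed
  obtain N B where B: "finite B" "span B = range (\<phi> ^^ N)"
    using assms(4) unfolding finite_potent_def fin_dim_sub_def by blast
  show ?thesis unfolding finite_potent_set_def
  proof (intro exI[of _ N] allI impI)
    fix fs :: "('v \<Rightarrow> 'v) list"
    assume len: "length fs = N" and fs: "set fs \<subseteq> gen_ideal scale \<phi> \<psi>"
    obtain b where b: "b \<in> gen_alg scale \<phi> \<psi>" "foldr (\<circ>) fs id = (\<phi> ^^ N) \<circ> b"
      using prod_decomp[OF assms(2) rel fs] len by blast
    let ?R = "range ((\<phi> ^^ N) \<circ> b)"
    have lin: "Vector_Spaces.linear scale scale ((\<phi> ^^ N) \<circ> b)"
      by (rule Vector_Spaces.linear_compose[OF A_linear[OF assms(2,3) b(1)] pow_linear[OF assms(2)]])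
    interpret LL: Vector_Spaces.linear scale scale "(\<phi> ^^ N) \<circ> b" by fact
    have sub: "subspace ?R" using LL.subspace_image[OF subspace_UNIV] by simp
    have RB: "?R \<subseteq> span B" using B(2) by auto
    obtain C where C: "C \<subseteq> ?R" "independent C" "?R \<subseteq> span C" "card C = dim ?R" by (rule basis_exists)
    have "C \<subseteq> span B" using C(1) RB by (rule order_trans)
    then have finC: "finite C" using independent_span_bound[OF B(1) C(2)] by (simp only:)
    have "span C = ?R" using span_minimal[OF C(1) sub] C(3) by (rule antisym)
    then show "fin_dim_sub scale (range (foldr (\<circ>) fs id))"
      unfolding fin_dim_sub_def b(2) using finC by (intro exI[of _ C]) simp
  qed
qed

end
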